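(* For every partition $\lambda$, $$F_\lambda\,\mathrm{He}_\lambda(x)=\sum_{j=0}^{\lfloor|\lambda|/2\rfloor}(-1)^j\frac{|\lambda|!}{j!\,(|\lambda|-2j)!\,2^j}\,a(\lambda,j)\,x^{|\lambda|-2j},$$ where $a(\lambda,j)$ is the value of the irreducible character of the symmetric group $S_{|\lambda|}$ associated to $\lambda$ on the conjugacy class of cycle type $(2^j,1^{|\lambda|-2j})$.
   Context: A partition is $\lambda=(\lambda_1\ge\dots\ge\lambda_{\ell(\lambda)}>0)$ with size $|\lambda|=\sum\lambda_i$; degree vector $n_i=\lambda_i+\ell(\lambda)-i$, $\Delta(n_\lambda)=\prod_{i<j}(n_j-n_i)$. Monic Hermite polynomials: $\mathrm{He}_0=1$, $\mathrm{He}_1=x$, $\mathrm{He}_n=x\mathrm{He}_{n-1}-(n-1)\mathrm{He}_{n-2}$. Wronskian Hermite polynomial: $\mathrm{He}_\lambda=\mathrm{Wr}[\mathrm{He}_{n_1},\dots,\mathrm{He}_{n_{\ell(\lambda)}}]/\Delta(n_\lambda)$, $\mathrm{He}_\emptyset=1$. $F_\lambda$ denotes the number of standard Young tableaux of shape $\lambda$. $(2^j,1^{m})$ denotes the cycle type with $j$ cycles of length 2 and $m$ fixed points. *)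

theory Defs
  imports "Jordan_Normal_Form.Determinant" "HOL-Combinatorics.Permutations"
    "HOL-Computational_Algebra.Polynomial" "HOL-Library.FuncSet"
begin

definition is_partition :: "nat list \<Rightarrow> bool" where
  "is_partition lam \<longleftrightarrow> sorted_wrt (\<ge>) lam \<and> (\<forall>x\<in>set lam. 0 < x)"

definition psize :: "nat list \<Rightarrow> nat" where
  "psize lam = sum_list lam"

definition degvec :: "nat list \<Rightarrow> nat \<Rightarrow> nat" where
  "degvec lam i = lam ! i + length lam - 1 - i"

definition Delta :: "nat list \<Rightarrow> int" where
  "Delta lam = (\<Prod>j<length lam. \<Prod>i<j. int (degvec lam j) - int (degvec lam i))"

text \<open>Monic (probabilists') Hermite polynomials.\<close>
fun He :: "nat \<Rightarrow> real poly" where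
  "He 0 = 1"
| "He (Suc 0) = [:0, 1:]"
| "He (Suc (Suc n)) = [:0, 1:] * He (Suc n) - smult (real (Suc n)) (He n)"

definition wronskian :: "real poly list \<Rightarrow> real poly" where
  "wronskian fs = det (mat (length fs) (length fs) (\<lambda>(i, j). (pderiv ^^ i) (fs ! j)))"

definition He_part :: "nat list \<Rightarrow> real poly" where
  "He_part lam = smult (1 / real_of_int (Delta lam))
     (wronskian (map (\<lambda>i. He (degvec lam i)) [0..<length lam]))"

definition cells :: "nat list \<Rightarrow> (nat \<times> nat) set" where
  "cells lam = {(i, j). i < length lam \<and> j < lam ! i}"

definition SYT :: "nat list \<Rightarrow> (nat \<times> nat \<Rightarrow> nat) set" where
  "SYT lam = {T. bij_betw T (cells lam) {1..psize lam}
      \<and> (\<forall>c. c \<notin> cells lam \<longrightarrow> T c = 0)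
      \<and> (\<forall>i j. (i, Suc j) \<in> cells lam \<longrightarrow> T (i, j) < T (i, Suc j))
      \<and> (\<forall>i j. (Suc i, j) \<in> cells lam \<longrightarrow> T (i, j) < T (Suc i, j))}"

definition num_SYT :: "nat list \<Rightarrow> nat" where
  "num_SYT lam = card (SYT lam)"

text \<open>Irreducible character value chi^lambda at cycle type mu (a list of cycle lengths),
  defined by the Frobenius character formula: chi^lambda_mu is the coefficient of
  x^(lambda+delta) in a_delta(x) * prod_k p_(mu_k)(x), with l = length lambda variables,
  delta_i = l-1-i and a_delta = sum_sigma sgn(sigma) x^(sigma delta).  Expanding the
  power sums over maps f assigning each part of mu to a variable gives:\<close>
definition sym_char :: "nat list \<Rightarrow> nat list \<Rightarrow> int" where
  "sym_char lam mu = (let l = length lam; r = length mu in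
     (\<Sum>\<sigma> | \<sigma> permutes {..<l}. sign \<sigma> *
        int (card {f \<in> {..<r} \<rightarrow>\<^sub>E {..<l}.
           \<forall>i<l. (l - 1 - \<sigma> i) + (\<Sum>k | k < r \<and> f k = i. mu ! k) = lam ! i + (l - 1 - i)})))"

definition cyc_type_2_1 :: "nat \<Rightarrow> nat \<Rightarrow> nat list" where
  "cyc_type_2_1 n j = replicate j 2 @ replicate (n - 2 * j) 1"

end

theory Submission
  imports Defs
begin


definition fall :: "real \<Rightarrow> nat \<Rightarrow> real" where
  "fall x k = (\<Prod>s<k. x - real s)"

lemma fall_Suc: "fall x (Suc k) = fall x k * (x - real k)"
  by (simp add: fall_def)

lemma fall_0[simp]: "fall x 0 = 1" by (simp add: fall_def)

lemma fall_nat_big: "n < k \<Longrightarrow> fall (real n) k = 0"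
  unfolding fall_def by (rule prod_zero) auto

lemma He_pderiv: "pderiv (He (Suc n)) = smult (real (Suc n)) (He n)"
proof (induction n rule: nat_less_induct)
  case (1 n)
  show ?case
  proof (cases n)
    case 0 then show ?thesis by (simp add: pderiv_pCons)
  next
    case (Suc k)
    note S = Suc
    show ?thesis
    proof (cases k)
      case 0 then show ?thesis using S
        by (simp add: pderiv_pCons pderiv_mult pderiv_diff numeral_2_eq_2 smult_add_left)
    next
      case (Suc j)
      have IH1: "pderiv (He (Suc k)) = smult (real (Suc k)) (He k)" using 1 S by simp
      have IH2: "pderiv (He (Suc j)) = smult (real (Suc j)) (He j)" using 1 S Suc by simp
      have "He (Suc n) = [:0, 1:] * He (Suc k) - smult (real (Suc k)) (He k)" using S by simp
      hence "pderiv (He (Suc n)) = He (Suc k) + [:0,1:] * smult (real (Suc k)) (He k)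
           - smult (real (Suc k)) (smult (real (Suc j)) (He j))"
        using IH1 IH2 Suc by (simp add: pderiv_mult pderiv_diff pderiv_pCons pderiv_smult)
      also have "\<dots> = He (Suc k) + smult (real (Suc k)) ([:0,1:] * He k - smult (real (Suc j)) (He j))"
        by (simp add: algebra_simps smult_diff_right)
      also have "[:0,1:] * He k - smult (real (Suc j)) (He j) = He (Suc k)" using Suc by simp
      finally have "pderiv (He (Suc n)) = He (Suc k) + smult (real (Suc k)) (He (Suc k))" .
      also have "\<dots> = smult (real (Suc n)) (He (Suc k))" using S
        by (metis of_nat_Suc smult_add_left smult_1_left)
      finally show ?thesis using S by simp
    qed
  qed
qed

lemma He_pderiv_pow: "(pderiv ^^ i) (He n) = smult (fall (real n) i) (He (n - i))"
proof (induction i)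
  case 0 then show ?case by simp
next
  case (Suc i)
  have "(pderiv ^^ Suc i) (He n) = smult (fall (real n) i) (pderiv (He (n - i)))"
    using Suc by (simp add: pderiv_smult)
  also have "\<dots> = smult (fall (real n) (Suc i)) (He (n - Suc i))"
  proof (cases "n - i")
    case 0
    then have "n \<le> i" by simp
    then have "fall (real n) (Suc i) = 0"
      unfolding fall_def using \<open>n \<le> i\<close> by (intro prod_zero) (auto intro!: bexI[of _ n])
    then show ?thesis using 0 by simp
  next
    case (Suc k)
    then have "n - Suc i = k" "real n - real i = real (Suc k)" by auto
    then show ?thesis using Suc by (simp add: He_pderiv fall_Suc)
  qed
  finally show ?case .
qed

definition E :: "nat \<Rightarrow> real poly" where
  "E c = smult (1 / fact c) (He c)"

lemma E_pderiv: "pderiv (E c) = (if c = 0 then 0 else E (c - 1))"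
proof (cases c)
  case 0 then show ?thesis by (simp add: E_def pderiv_smult)
next
  case (Suc k)
  have "pderiv (E c) = smult (1 / fact (Suc k) * real (Suc k)) (He k)"
    using Suc by (simp add: E_def pderiv_smult He_pderiv)
  also have "1 / fact (Suc k) * real (Suc k) = (1 / fact k :: real)"
    by (simp add: divide_simps del: of_nat_Suc)
  finally show ?thesis using Suc by (simp add: E_def)
qed

definition PP :: "nat \<Rightarrow> (nat \<Rightarrow> nat) \<Rightarrow> real poly" where
  "PP l m = (\<Prod>i<l. E (m i))"

lemma prod_upd: "i < (l::nat) \<Longrightarrow> (\<Prod>k<l. f ((m(i := v)) k)) = f v * (\<Prod>k\<in>{..<l}-{i}. f (m k))"
  by (subst prod.remove[of _ i]) (auto intro!: prod.cong)

lemma sum_upd: "i < (l::nat) \<Longrightarrow> (\<Sum>k<l. (m(i := v)) k) + m i = (\<Sum>k<l. m k) + (v::nat)"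
proof -
  assume i: "i < l"
  have "(\<Sum>k<l. (m(i := v)) k) = v + (\<Sum>k\<in>{..<l}-{i}. m k)"
    using i by (subst sum.remove[of _ i]) (auto intro!: sum.cong)
  moreover have "(\<Sum>k<l. m k) = m i + (\<Sum>k\<in>{..<l}-{i}. m k)"
    using i by (subst sum.remove[of _ i]) auto
  ultimately show ?thesis by simp
qed

lemma PP_pderiv: "pderiv (PP l m) = (\<Sum>i<l. if m i = 0 then 0 else PP l (m(i := m i - 1)))"
  unfolding PP_def pderiv_prod
proof (rule sum.cong, simp)
  fix i assume "i \<in> {..<l}"
  then have i: "i < l" by simp
  have "(\<Prod>k<l. E ((m(i := m i - 1)) k)) = E (m i - 1) * (\<Prod>k\<in>{..<l}-{i}. E (m k))"
    by (rule prod_upd[OF i])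
  then show "prod (\<lambda>i. E (m i)) ({..<l} - {i}) * pderiv (E (m i)) =
        (if m i = 0 then 0 else \<Prod>k<l. E ((m(i := m i - 1)) k))"
    by (simp add: E_pderiv mult.commute)
qed

definition fsum :: "(nat \<Rightarrow> nat) \<Rightarrow> nat list \<Rightarrow> nat \<Rightarrow> nat" where
  "fsum f mu i = (\<Sum>k | k < length mu \<and> f k = i. mu ! k)"

definition Kc :: "nat \<Rightarrow> nat list \<Rightarrow> (nat \<Rightarrow> nat) \<Rightarrow> nat" where
  "Kc l mu m = card {f \<in> {..<length mu} \<rightarrow>\<^sub>E {..<l}. \<forall>i<l. fsum f mu i = m i}"

lemma fsum_upd_out: "fsum (f(length mu := y)) mu i = fsum f mu i"
  unfolding fsum_def by (intro sum.cong) auto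

lemma fsum_snoc: "fsum f (mu @ [x]) i = fsum f mu i + (if f (length mu) = i then x else 0)"
proof -
  let ?r = "length mu"
  have fin: "finite {k. k < ?r \<and> f k = i}" by simp
  have eq: "(\<Sum>k | k < ?r \<and> f k = i. (mu @ [x]) ! k) = fsum f mu i"
    unfolding fsum_def by (intro sum.cong) (auto simp: nth_append)
  show ?thesis
  proof (cases "f ?r = i")
    case True
    have "{k. k < length (mu @ [x]) \<and> f k = i} = insert ?r {k. k < ?r \<and> f k = i}"
      using True by auto
    then have "fsum f (mu @ [x]) i = (mu @ [x]) ! ?r + (\<Sum>k | k < ?r \<and> f k = i. (mu @ [x]) ! k)"
      unfolding fsum_def using fin by simp
    then show ?thesis using True eq by simp
  next
    case False
    have "{k. k < length (mu @ [x]) \<and> f k = i} = {k. k < ?r \<and> f k = i}"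
      using False by (auto simp: less_Suc_eq)
    then show ?thesis using False eq unfolding fsum_def by simp
  qed
qed

lemma Kc_Nil: "Kc l [] m = (if \<forall>i<l. m i = 0 then 1 else 0)"
  unfolding Kc_def fsum_def by (simp add: PiE_empty_domain)

lemma Kc_snoc: "Kc l (mu @ [x]) m = (\<Sum>i | i < l \<and> x \<le> m i. Kc l mu (m(i := m i - x)))"
proof -
  let ?r = "length mu"
  define S where "S = {f \<in> {..<Suc ?r} \<rightarrow>\<^sub>E {..<l}. \<forall>i<l. fsum f (mu @ [x]) i = m i}"
  define I where "I = {i. i < l \<and> x \<le> m i}"
  define Si where "Si i = {f \<in> S. f ?r = i}" for i
  define T where "T i = {g \<in> {..<?r} \<rightarrow>\<^sub>E {..<l}. \<forall>i'<l. fsum g mu i' = (m(i := m i - x)) i'}" for i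
  have finS: "finite S" unfolding S_def by (rule finite_subset[of _ "{..<Suc ?r} \<rightarrow>\<^sub>E {..<l}"]) (auto intro: finite_PiE)
  have SU: "S = (\<Union>i\<in>I. Si i)"
  proof (intro equalityI subsetI)
    fix f assume f: "f \<in> S"
    then have "f ?r < l" unfolding S_def by auto
    moreover have "fsum f (mu @ [x]) (f ?r) = m (f ?r)" using f \<open>f ?r < l\<close> unfolding S_def by auto
    then have "x \<le> m (f ?r)" by (simp add: fsum_snoc)
    ultimately show "f \<in> (\<Union>i\<in>I. Si i)" using f unfolding I_def Si_def by auto
  qed (auto simp: Si_def)
  have "card S = (\<Sum>i\<in>I. card (Si i))"
    unfolding SU by (rule card_UN_disjoint) (auto simp: I_def Si_def intro: finite_subset[OF _ finS])
  moreover have "card (Si i) = Kc l mu (m(i := m i - x))" if i: "i \<in> I" for i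
  proof -
    have il: "i < l" "x \<le> m i" using i unfolding I_def by auto
    have "bij_betw (\<lambda>f. f(?r := undefined)) (Si i) (T i)"
    proof (rule bij_betw_byWitness[where f' = "\<lambda>g. g(?r := i)"])
      show "\<forall>f\<in>Si i. f(?r := undefined, ?r := i) = f" unfolding Si_def by auto
      show "\<forall>g\<in>T i. g(?r := i, ?r := undefined) = g" unfolding T_def by (auto simp: PiE_def extensional_def)
      show "(\<lambda>f. f(?r := undefined)) ` Si i \<subseteq> T i"
      proof
        fix g assume "g \<in> (\<lambda>f. f(?r := undefined)) ` Si i"
        then obtain f where f: "f \<in> Si i" and g: "g = f(?r := undefined)" by auto
        have fS: "f \<in> {..<Suc ?r} \<rightarrow>\<^sub>E {..<l}" "\<forall>i'<l. fsum f (mu @ [x]) i' = m i'" "f ?r = i"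
          using f unfolding Si_def S_def by auto
        have "g \<in> {..<?r} \<rightarrow>\<^sub>E {..<l}" using fS(1) unfolding g by (auto simp: PiE_def extensional_def)
        moreover have "fsum g mu i' = (m(i := m i - x)) i'" if "i' < l" for i'
          using fS(2)[rule_format, OF that] fS(3) il unfolding g fsum_upd_out by (auto simp: fsum_snoc)
        ultimately show "g \<in> T i" unfolding T_def by auto
      qed
      show "(\<lambda>g. g(?r := i)) ` T i \<subseteq> Si i"
      proof
        fix f assume "f \<in> (\<lambda>g. g(?r := i)) ` T i"
        then obtain g where g: "g \<in> T i" and f: "f = g(?r := i)" by auto
        have gT: "g \<in> {..<?r} \<rightarrow>\<^sub>E {..<l}" "\<forall>i'<l. fsum g mu i' = (m(i := m i - x)) i'"
          using g unfolding T_def by auto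
        have "f \<in> {..<Suc ?r} \<rightarrow>\<^sub>E {..<l}" using gT(1) il unfolding f by (auto simp: PiE_def extensional_def Pi_iff less_Suc_eq)
        moreover have "fsum f (mu @ [x]) i' = m i'" if "i' < l" for i'
          using gT(2)[rule_format, OF that] il unfolding f by (auto simp: fsum_snoc fsum_upd_out)
        ultimately show "f \<in> Si i" unfolding Si_def S_def f by auto
      qed
    qed
    then have "card (Si i) = card (T i)" by (rule bij_betw_same_card)
    then show ?thesis unfolding T_def Kc_def by simp
  qed
  ultimately show ?thesis unfolding Kc_def I_def S_def by simp
qed


definition hh :: "nat \<Rightarrow> real" where "hh c = poly (He c) 0 / fact c"

lemma He0_SS: "poly (He (Suc (Suc c))) 0 = - real (Suc c) * poly (He c) 0"
  by (simp add: algebra_simps)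

lemma hh_0[simp]: "hh 0 = 1" by (simp add: hh_def)
lemma hh_1[simp]: "hh (Suc 0) = 0" by (simp add: hh_def)

lemma hh_SS: "hh c = - real (Suc (Suc c)) * hh (Suc (Suc c))"
proof -
  have "hh (Suc (Suc c)) = - real (Suc c) * poly (He c) 0 / (real (Suc (Suc c)) * real (Suc c) * fact c)"
    unfolding hh_def by (simp only: He0_SS fact_Suc of_nat_mult) (simp add: algebra_simps)
  then show ?thesis unfolding hh_def by (simp add: field_simps del: of_nat_Suc)
qed

lemma hh_odd: "hh (Suc (2 * k)) = 0"
proof (induction k)
  case 0 then show ?case by (simp add: hh_def)
next
  case (Suc k)
  have "hh (Suc (2 * k)) = - real (Suc (Suc (Suc (2*k)))) * hh (Suc (2 * Suc k))"
    using hh_SS[of "Suc (2*k)"] by simp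
  then show ?case using Suc by simp
qed

lemma hh_odd': "odd c \<Longrightarrow> hh c = 0"
  using hh_odd by (metis oddE Suc_eq_plus1)

lemma coeff0_PP: "coeff (PP l m) 0 = (\<Prod>i<l. hh (m i))"
  by (simp add: poly_0_coeff_0[symmetric] PP_def poly_prod E_def hh_def)

lemma prod_hh_odd: fixes l :: nat and m :: "nat \<Rightarrow> nat" shows "odd (\<Sum>i<l. m i) \<Longrightarrow> (\<Prod>i<l. hh (m i)) = 0"
proof -
  assume o: "odd (\<Sum>i<l. m i)"
  have "\<exists>i<l. odd (m i)"
  proof (rule ccontr)
    assume "\<not> ?thesis"
    then have e0: "{a. a < l \<and> odd (m a)} = {}" by auto
    have "even (\<Sum>i<l. m i)" by (subst even_sum_iff) (simp_all add: e0)
    then show False using o by simp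
  qed
  then show ?thesis by (auto intro!: prod_zero hh_odd')
qed

lemma base_even: "(\<Sum>i<l. m i) = 2 * b \<Longrightarrow>
  (\<Prod>i<l. hh (m i)) = (-1/2)^b / fact b * real (Kc l (replicate b 2) m)"
proof (induction b arbitrary: m)
  case 0
  then have "\<forall>i<l. m i = 0" by simp
  then show ?case by (simp add: Kc_Nil)
next
  case (Suc b)
  let ?Pi = "(\<Prod>i<l. hh (m i))"
  define I where "I = {i. i < l \<and> 2 \<le> m i}"
  have rep: "replicate (Suc b) (2::nat) = replicate b 2 @ [2]" by (simp add: replicate_append_same)
  have K: "Kc l (replicate (Suc b) 2) m = (\<Sum>i\<in>I. Kc l (replicate b 2) (m(i := m i - 2)))"
    unfolding rep Kc_snoc I_def by simp
  have Ki: "real (Kc l (replicate b 2) (m(i := m i - 2))) = (-2)^b * fact b * (- real (m i) * ?Pi)"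
    if i: "i \<in> I" for i
  proof -
    have il: "i < l" "2 \<le> m i" using i I_def by auto
    have "(\<Sum>k<l. (m(i := m i - 2)) k) + m i = (\<Sum>k<l. m k) + (m i - 2)" by (rule sum_upd[OF il(1)])
    then have s: "(\<Sum>k<l. (m(i := m i - 2)) k) = 2 * b" using Suc.prems il by simp
    have IH: "(\<Prod>k<l. hh ((m(i := m i - 2)) k)) = (-1/2)^b / fact b * real (Kc l (replicate b 2) (m(i := m i - 2)))"
      by (rule Suc.IH[OF s])
    have p1: "(\<Prod>k<l. hh ((m(i := m i - 2)) k)) = hh (m i - 2) * (\<Prod>k\<in>{..<l}-{i}. hh (m k))"
      by (rule prod_upd[OF il(1)])
    have p2: "?Pi = hh (m i) * (\<Prod>k\<in>{..<l}-{i}. hh (m k))"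
      using il by (subst prod.remove[of _ i]) auto
    have ss: "Suc (Suc (m i - 2)) = m i" using il by simp
    have h: "hh (m i - 2) = - real (m i) * hh (m i)"
      using hh_SS[of "m i - 2"] unfolding ss by simp
    have "(\<Prod>k<l. hh ((m(i := m i - 2)) k)) = - real (m i) * ?Pi"
      using p1 p2 h by simp
    with IH have R: "(-1/2)^b / fact b * real (Kc l (replicate b 2) (m(i := m i - 2))) = - real (m i) * ?Pi"
      by simp
    have e: "(-2::real)^b * (-1/2)^b = 1" by (simp add: power_mult_distrib[symmetric])
    have "real (Kc l (replicate b 2) (m(i := m i - 2))) = ((-2)^b * (-1/2)^b) * (fact b / fact b) * real (Kc l (replicate b 2) (m(i := m i - 2)))"
      using e by simp
    also have "\<dots> = (-2)^b * fact b * ((-1/2)^b / fact b * real (Kc l (replicate b 2) (m(i := m i - 2))))"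
      by (simp add: algebra_simps)
    finally have Xeq: "real (Kc l (replicate b 2) (m(i := m i - 2))) = (-2)^b * fact b * ((-1/2)^b / fact b * real (Kc l (replicate b 2) (m(i := m i - 2))))" .
    show ?thesis using Xeq unfolding R .
  qed
  have KK: "real (Kc l (replicate (Suc b) 2) m) = (-2)^b * fact b * (- ?Pi) * (\<Sum>i\<in>I. real (m i))"
    unfolding K of_nat_sum using Ki by (simp add: sum_distrib_left sum_distrib_right mult_ac sum_negf)
  show ?case
  proof (cases "?Pi = 0")
    case True
    have "real (Kc l (replicate (Suc b) 2) m) = 0" using KK unfolding True by (simp only: mult_zero_right mult_zero_left minus_zero)
    then show ?thesis unfolding True by (simp only: mult_zero_right)
  next
    case False
    have no1: "m i \<noteq> 1" if "i < l" for i
    proof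
      assume "m i = 1"
      then have "hh (m i) = 0" by simp
      then have "?Pi = 0" using that by (intro prod_zero) auto
      then show False using False by simp
    qed
    have "(\<Sum>i\<in>I. m i) = (\<Sum>i<l. m i)"
      by (rule sum.mono_neutral_left) (use no1 in \<open>auto simp: I_def not_le less_Suc_eq numeral_2_eq_2\<close>)
    then have "(\<Sum>i\<in>I. real (m i)) = 2 * real (Suc b)" using Suc.prems
      by (metis of_nat_sum of_nat_mult of_nat_numeral)
    then have K2: "real (Kc l (replicate (Suc b) 2) m) = (-2)^(Suc b) * fact (Suc b) * ?Pi"
      using KK by (simp add: algebra_simps)
    have e: "(-1/2::real)^(Suc b) * (-2)^(Suc b) = 1" by (simp add: power_mult_distrib[symmetric])
    have gen: "\<And>A B F P::real. F \<noteq> 0 \<Longrightarrow> A / F * (B * F * P) = (A*B)*P" by (simp add: field_simps)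
    have F: "fact (Suc b) \<noteq> (0::real)" by (rule fact_nonzero)
    show ?thesis unfolding K2 gen[OF F] e by simp
  qed
qed

lemma sum_if_eq: fixes m :: "nat \<Rightarrow> nat" shows "(\<Sum>i<l. if m i = 0 then 0 else (f i :: real)) = (\<Sum>i | i < (l::nat) \<and> 1 \<le> m i. f i)"
proof -
  have "{i. i < l \<and> 1 \<le> m i} = {i\<in>{..<l}. m i \<noteq> 0}" by auto
  moreover have "(\<Sum>i\<in>{..<l}. if m i \<noteq> 0 then f i else 0) = (\<Sum>i\<in>{i\<in>{..<l}. m i \<noteq> 0}. f i)"
    by (rule sum.inter_filter[symmetric]) simp
  moreover have "(\<Sum>i<l. if m i = 0 then 0 else (f i :: real)) = (\<Sum>i\<in>{..<l}. if m i \<noteq> 0 then f i else 0)"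
    by (intro sum.cong) auto
  ultimately show ?thesis by simp
qed

lemma coeff_PP: "coeff (PP l m) a = (if a \<le> (\<Sum>i<l. m i) \<and> even ((\<Sum>i<l. m i) - a)
   then (-1/2)^(((\<Sum>i<l. m i) - a) div 2) / (fact a * fact (((\<Sum>i<l. m i) - a) div 2))
        * real (Kc l (replicate (((\<Sum>i<l. m i) - a) div 2) 2 @ replicate a 1) m) else 0)"
proof (induction a arbitrary: m)
  case 0
  show ?case
  proof (cases "even (\<Sum>i<l. m i)")
    case True
    then obtain b where b: "(\<Sum>i<l. m i) = 2 * b" by blast
    show ?thesis unfolding coeff0_PP base_even[OF b] using b by simp
  next
    case False
    then show ?thesis unfolding coeff0_PP using prod_hh_odd[OF False] by simp
  qed
next
  case (Suc a)
  define N where "N = (\<Sum>i<l. m i)"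
  define b where "b = (N - Suc a) div 2"
  define mu where "mu = replicate b (2::nat) @ replicate a 1"
  have mu1: "mu @ [1] = replicate b 2 @ replicate (Suc a) 1"
    unfolding mu_def by (simp add: replicate_append_same)
  have "coeff (PP l m) (Suc a) = coeff (pderiv (PP l m)) a / real (Suc a)"
    by (simp add: coeff_pderiv del: of_nat_Suc)
  also have "coeff (pderiv (PP l m)) a = (\<Sum>i<l. if m i = 0 then 0 else coeff (PP l (m(i := m i - 1))) a)"
    unfolding PP_pderiv coeff_sum by (intro sum.cong) auto
  finally have c1: "coeff (PP l m) (Suc a) = (\<Sum>i<l. if m i = 0 then 0 else coeff (PP l (m(i := m i - 1))) a) / real (Suc a)" .
  show ?case
  proof (cases "N = 0")
    case True
    then have "\<forall>i<l. m i = 0" unfolding N_def by simp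
    then show ?thesis unfolding c1 N_def[symmetric] using True by simp
  next
    case False
    have Ni: "(\<Sum>k<l. (m(i := m i - 1)) k) = N - 1" if "i < l" "m i \<noteq> 0" for i
      using sum_upd[OF that(1), of m "m i - 1"] that unfolding N_def by simp
    have e1: "N - 1 - a = N - Suc a" by simp
    have e2: "a \<le> N - 1 \<longleftrightarrow> Suc a \<le> N" using False by arith
    show ?thesis
    proof (cases "Suc a \<le> N \<and> even (N - Suc a)")
      case C: True
      have c2: "a \<le> N - 1 \<and> even (N - 1 - a)" unfolding e1 using C e2 by blast
      have "coeff (PP l (m(i := m i - 1))) a = (-1/2)^b / (fact a * fact b) * real (Kc l mu (m(i := m i - 1)))"
        if "i < l" "m i \<noteq> 0" for i
        unfolding Suc.IH Ni[OF that] if_P[OF c2] unfolding e1 mu_def b_def ..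
      then have "(\<Sum>i<l. if m i = 0 then 0 else coeff (PP l (m(i := m i - 1))) a)
          = (\<Sum>i<l. if m i = 0 then 0 else (-1/2)^b / (fact a * fact b) * real (Kc l mu (m(i := m i - 1))))"
        by (intro sum.cong) auto
      also have "\<dots> = (-1/2)^b / (fact a * fact b) * real (Kc l (mu @ [1]) m)"
        unfolding sum_if_eq Kc_snoc of_nat_sum sum_distrib_left by simp
      finally have "coeff (PP l m) (Suc a) = (-1/2)^b / (fact a * fact b) * real (Kc l (mu @ [1]) m) / real (Suc a)"
        unfolding c1 by simp
      moreover have "(-1/2)^b / (fact a * fact b) * X / real (Suc a) = (-1/2)^b / (fact (Suc a) * fact b) * X" for X :: real
        by (simp add: field_simps del: of_nat_Suc)
      ultimately show ?thesis unfolding N_def[symmetric] if_P[OF C] unfolding b_def[symmetric] mu1 by simp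
    next
      case C: False
      have "coeff (PP l (m(i := m i - 1))) a = 0" if "i < l" "m i \<noteq> 0" for i
      proof -
        have c3: "\<not> (a \<le> N - 1 \<and> even (N - 1 - a))" unfolding e1 using C e2 by blast
        show ?thesis by (simp only: Suc.IH Ni[OF that] if_not_P[OF c3])
      qed
      then have "coeff (PP l m) (Suc a) = 0" unfolding c1 by (simp add: sum.neutral)
      then show ?thesis unfolding N_def[symmetric] by (simp only: if_not_P[OF C])
    qed
  qed
qed


definition corner :: "nat list \<Rightarrow> nat \<Rightarrow> bool" where
  "corner lam i \<longleftrightarrow> i < length lam \<and> 0 < lam ! i \<and> (Suc i < length lam \<longrightarrow> lam ! Suc i < lam ! i)"

lemma sorted_nth: "sorted_wrt (\<ge>) (lam::nat list) \<Longrightarrow> i \<le> j \<Longrightarrow> j < length lam \<Longrightarrow> lam ! j \<le> lam ! i"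
proof -
  assume a: "sorted_wrt (\<ge>) lam" "i \<le> j" "j < length lam"
  show ?thesis
  proof (cases "i = j")
    case False
    then have "i < j" using a by simp
    then show ?thesis using a unfolding sorted_wrt_iff_nth_less by blast
  qed simp
qed

lemma finite_cells: "finite (cells lam)"
proof -
  have "cells lam \<subseteq> {..<length lam} \<times> {..<psize lam}"
    unfolding cells_def psize_def using elem_le_sum_list[of _ lam] by fastforce
  then show ?thesis by (rule finite_subset) auto
qed

lemma SYT_sub: "SYT lam \<subseteq> {f. \<forall>x. (x \<in> cells lam \<longrightarrow> f x \<in> {1..psize lam}) \<and> (x \<notin> cells lam \<longrightarrow> f x = 0)}"
proof
  fix T assume "T \<in> SYT lam"
  then have "bij_betw T (cells lam) {1..psize lam}" "\<forall>c. c \<notin> cells lam \<longrightarrow> T c = 0"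
    unfolding SYT_def by auto
  then show "T \<in> {f. \<forall>x. (x \<in> cells lam \<longrightarrow> f x \<in> {1..psize lam}) \<and> (x \<notin> cells lam \<longrightarrow> f x = 0)}"
    using bij_betwE by blast
qed

lemma finite_SYT: "finite (SYT lam)"
  by (rule finite_subset[OF SYT_sub finite_set_of_finite_funs[OF finite_cells finite_atLeastAtMost]])

lemma SYT_zero: assumes "psize lam = 0" shows "num_SYT lam = 1"
proof -
  have "\<forall>i<length lam. lam ! i = 0" using assms elem_le_sum_list[of _ lam] unfolding psize_def by fastforce
  then have c: "cells lam = {}" unfolding cells_def by auto
  have "SYT lam = {\<lambda>_. 0}" unfolding SYT_def c using assms by (auto simp: bij_betw_def)
  then show ?thesis unfolding num_SYT_def by simp
qed

lemma cells_remove: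
  assumes "corner lam i"
  shows "cells (lam[i := lam ! i - 1]) = cells lam - {(i, lam ! i - 1)}"
  using assms unfolding cells_def corner_def by (auto simp: nth_list_update split: if_splits)

lemma sorted_remove:
  assumes "sorted_wrt (\<ge>) lam" "corner lam i"
  shows "sorted_wrt (\<ge>) (lam[i := lam ! i - 1])"
  unfolding sorted_wrt_iff_nth_less
proof (intro allI impI)
  fix a b assume ab: "a < b" "b < length (lam[i := lam ! i - 1])"
  then have bl: "b < length lam" by simp
  have s: "lam ! b \<le> lam ! a" using sorted_nth[OF assms(1), of a b] ab by simp
  show "lam[i := lam ! i - 1] ! b \<le> lam[i := lam ! i - 1] ! a"
  proof (cases "a = i")
    case True
    then have "lam ! b \<le> lam ! Suc i" using sorted_nth[OF assms(1), of "Suc i" b] ab bl by simp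
    moreover have "lam ! Suc i < lam ! i" using assms(2) ab bl True unfolding corner_def by simp
    moreover have "b \<noteq> i" using True ab by simp
    ultimately show ?thesis using True ab bl by (simp add: nth_list_update_neq)
  next
    case False
    have "lam[i := lam ! i - 1] ! b \<le> lam ! b"
    proof (cases "b = i")
      case True then show ?thesis using bl by simp
    next
      case False then show ?thesis by (simp add: nth_list_update_neq)
    qed
    then show ?thesis using False s by (simp add: nth_list_update_neq)
  qed
qed

lemma psize_remove:
  assumes "corner lam i" shows "psize (lam[i := lam ! i - 1]) = psize lam - 1"
  using assms unfolding psize_def corner_def
  by (simp add: sum_list_update)

lemma SYT_iff: "T \<in> SYT lam \<longleftrightarrow> bij_betw T (cells lam) {1..psize lam}
      \<and> (\<forall>c. c \<notin> cells lam \<longrightarrow> T c = 0)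
      \<and> (\<forall>i j. (i, Suc j) \<in> cells lam \<longrightarrow> T (i, j) < T (i, Suc j))
      \<and> (\<forall>i j. (Suc i, j) \<in> cells lam \<longrightarrow> T (i, j) < T (Suc i, j))"
  unfolding SYT_def by simp

lemma cells_iff: "(a, b) \<in> cells lam \<longleftrightarrow> a < length lam \<and> b < lam ! a"
  unfolding cells_def by simp

lemma SYT_rec:
  assumes sorted: "sorted_wrt (\<ge>) lam" and N0: "psize lam \<noteq> 0"
  shows "num_SYT lam = (\<Sum>i | corner lam i. num_SYT (lam[i := lam ! i - 1]))"
proof -
  define N where "N = psize lam"
  define l where "l = length lam"
  define A where "A i = {T \<in> SYT lam. T (i, lam ! i - 1) = N}" for i
  define Cor where "Cor = {i. corner lam i}"
  have finCor: "finite Cor" unfolding Cor_def corner_def by (rule finite_subset[of _ "{..<length lam}"]) auto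
  have cover: "SYT lam = (\<Union>i\<in>Cor. A i)"
  proof (intro equalityI subsetI)
    fix T assume T: "T \<in> SYT lam"
    have bij: "bij_betw T (cells lam) {1..N}" and row: "\<And>i j. (i, Suc j) \<in> cells lam \<Longrightarrow> T (i, j) < T (i, Suc j)"
      and col: "\<And>i j. (Suc i, j) \<in> cells lam \<Longrightarrow> T (i, j) < T (Suc i, j)"
      using T unfolding SYT_iff N_def by auto
    have "N \<in> T ` cells lam" using bij N0 unfolding bij_betw_def N_def by auto
    then obtain a b where ab: "(a, b) \<in> cells lam" "T (a, b) = N" by auto
    have le: "T x \<le> N" if "x \<in> cells lam" for x using bij_betwE[OF bij] that by auto
    have bl: "a < l" "b < lam ! a" using ab(1) unfolding cells_iff l_def by auto
    have b: "b = lam ! a - 1"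
    proof (rule ccontr)
      assume "b \<noteq> lam ! a - 1"
      then have "(a, Suc b) \<in> cells lam" using bl unfolding cells_iff l_def by auto
      then have "T (a, b) < T (a, Suc b)" "T (a, Suc b) \<le> N" using row le by auto
      then show False using ab by simp
    qed
    have "corner lam a"
      unfolding corner_def
    proof (intro conjI impI)
      show "a < length lam" "0 < lam ! a" using bl l_def by auto
      assume sa: "Suc a < length lam"
      show "lam ! Suc a < lam ! a"
      proof (rule ccontr)
        assume "\<not> lam ! Suc a < lam ! a"
        then have "(Suc a, b) \<in> cells lam" using bl sa unfolding cells_iff by auto
        then have "T (a, b) < T (Suc a, b)" "T (Suc a, b) \<le> N" using col le by auto
        then show False using ab by simp
      qed
    qed
    then show "T \<in> (\<Union>i\<in>Cor. A i)" using T ab b unfolding A_def Cor_def by auto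
  qed (auto simp: A_def)
  have disj: "A i \<inter> A j = {}" if "i \<in> Cor" "j \<in> Cor" "i \<noteq> j" for i j
  proof (rule ccontr)
    assume "A i \<inter> A j \<noteq> {}"
    then obtain T where T: "T \<in> SYT lam" "T (i, lam ! i - 1) = N" "T (j, lam ! j - 1) = N"
      unfolding A_def by auto
    have "inj_on T (cells lam)" using T(1) unfolding SYT_iff bij_betw_def by auto
    moreover have "(i, lam ! i - 1) \<in> cells lam" "(j, lam ! j - 1) \<in> cells lam"
      using that unfolding Cor_def corner_def cells_iff by auto
    ultimately have "(i, lam ! i - 1) = (j, lam ! j - 1)" using T unfolding inj_on_def by metis
    then show False using that by simp
  qed
  have cardA: "card (A i) = num_SYT (lam[i := lam ! i - 1])" if i: "i \<in> Cor" for i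
  proof -
    define lam' where "lam' = lam[i := lam ! i - 1]"
    define c where "c = (i, lam ! i - 1)"
    have cor: "corner lam i" using i Cor_def by simp
    have C': "cells lam' = cells lam - {c}" unfolding lam'_def c_def by (rule cells_remove[OF cor])
    have cC: "c \<in> cells lam" using cor unfolding c_def corner_def cells_iff by auto
    have N': "psize lam' = N - 1" unfolding lam'_def N_def by (rule psize_remove[OF cor])
    have s': "sorted_wrt (\<ge>) lam'" unfolding lam'_def by (rule sorted_remove[OF sorted cor])
    have cnot1: "(i, lam ! i) \<notin> cells lam" unfolding cells_iff by simp
    have cnot2: "(Suc i, lam ! i - 1) \<notin> cells lam" using cor unfolding cells_iff corner_def by auto
    have Npos: "N \<noteq> 0" using N0 N_def by simp
    have colD: "(a, b) \<in> cells L" if "(Suc a, b) \<in> cells L" "sorted_wrt (\<ge>) L" for a b L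
      using that sorted_nth[OF that(2), of a "Suc a"] unfolding cells_iff by auto
    have rowD: "(a, b) \<in> cells L" if "(a, Suc b) \<in> cells L" for a b L
      using that unfolding cells_iff by auto
    have "bij_betw (\<lambda>T. T(c := 0)) (A i) (SYT lam')"
    proof (rule bij_betw_byWitness[where f' = "\<lambda>T. T(c := N)"])
      show "\<forall>T\<in>A i. T(c := 0, c := N) = T" unfolding A_def c_def by auto
      show "\<forall>T\<in>SYT lam'. T(c := N, c := 0) = T"
      proof
        fix T assume "T \<in> SYT lam'"
        then have "T c = 0" using C' unfolding SYT_iff by blast
        then show "T(c := N, c := 0) = T" by auto
      qed
      show "(\<lambda>T. T(c := 0)) ` A i \<subseteq> SYT lam'"
      proof
        fix T' assume "T' \<in> (\<lambda>T. T(c := 0)) ` A i"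
        then obtain T where T: "T \<in> A i" and T': "T' = T(c := 0)" by auto
        have bij: "bij_betw T (cells lam) {1..N}" and zero: "\<And>x. x \<notin> cells lam \<Longrightarrow> T x = 0"
          and row: "\<And>i j. (i, Suc j) \<in> cells lam \<Longrightarrow> T (i, j) < T (i, Suc j)"
          and col: "\<And>i j. (Suc i, j) \<in> cells lam \<Longrightarrow> T (i, j) < T (Suc i, j)"
          and Tc: "T c = N"
          using T unfolding A_def SYT_iff N_def c_def by auto
        have "bij_betw T (cells lam - {c}) ({1..N} - {N})"
          by (rule bij_betw_DiffI[OF bij]) (use cC Tc Npos in auto)
        moreover have "{1..N} - {N} = {1..psize lam'}" using N' Npos by auto
        ultimately have "bij_betw T (cells lam') {1..psize lam'}" using C' by simp
        then have b1: "bij_betw T' (cells lam') {1..psize lam'}"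
          by (rule bij_betw_cong[THEN iffD1, rotated]) (use C' T' in auto)
        have b2: "\<forall>x. x \<notin> cells lam' \<longrightarrow> T' x = 0" using C' T' zero by auto
        have b3: "\<forall>a b. (a, Suc b) \<in> cells lam' \<longrightarrow> T' (a, b) < T' (a, Suc b)"
        proof (intro allI impI)
          fix a b assume ab: "(a, Suc b) \<in> cells lam'"
          then have "(a, b) \<in> cells lam'" by (rule rowD)
          then show "T' (a, b) < T' (a, Suc b)" using ab C' T' row by auto
        qed
        have b4: "\<forall>a b. (Suc a, b) \<in> cells lam' \<longrightarrow> T' (a, b) < T' (Suc a, b)"
        proof (intro allI impI)
          fix a b assume ab: "(Suc a, b) \<in> cells lam'"
          then have "(a, b) \<in> cells lam'" using colD s' by blast
          then show "T' (a, b) < T' (Suc a, b)" using ab C' T' col by auto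
        qed
        show "T' \<in> SYT lam'" unfolding SYT_iff using b1 b2 b3 b4 by blast
      qed
      show "(\<lambda>T. T(c := N)) ` SYT lam' \<subseteq> A i"
      proof
        fix T assume "T \<in> (\<lambda>T. T(c := N)) ` SYT lam'"
        then obtain T' where T': "T' \<in> SYT lam'" and T: "T = T'(c := N)" by auto
        have bij: "bij_betw T' (cells lam') {1..N - 1}" and zero: "\<And>x. x \<notin> cells lam' \<Longrightarrow> T' x = 0"
          and row: "\<And>i j. (i, Suc j) \<in> cells lam' \<Longrightarrow> T' (i, j) < T' (i, Suc j)"
          and col: "\<And>i j. (Suc i, j) \<in> cells lam' \<Longrightarrow> T' (i, j) < T' (Suc i, j)"
          using T' unfolding SYT_iff N' by auto
        have le: "T' x \<le> N - 1" if "x \<in> cells lam'" for x using bij_betwE[OF bij] that by auto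
        have "bij_betw T' (cells lam') {1..N - 1}" by (rule bij)
        then have "bij_betw T (cells lam') {1..N - 1}"
          by (rule bij_betw_cong[THEN iffD1, rotated]) (use C' T in auto)
        then have "bij_betw T (cells lam' \<union> {c}) ({1..N - 1} \<union> {T c})"
          by (rule notIn_Un_bij_betw[rotated 2]) (use C' T Npos in auto)
        moreover have "cells lam' \<union> {c} = cells lam" using C' cC by auto
        moreover have "{1..N - 1} \<union> {T c} = {1..psize lam}" using T Npos N_def by auto
        ultimately have b1: "bij_betw T (cells lam) {1..psize lam}" by simp
        have b2: "\<forall>x. x \<notin> cells lam \<longrightarrow> T x = 0" using C' T zero cC by auto
        have b3: "\<forall>a b. (a, Suc b) \<in> cells lam \<longrightarrow> T (a, b) < T (a, Suc b)"
        proof (intro allI impI)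
          fix a b assume ab: "(a, Suc b) \<in> cells lam"
          have ab0: "(a, b) \<in> cells lam" using ab by (rule rowD)
          have ne: "(a, b) \<noteq> c" using ab cnot1 unfolding c_def by (auto simp: cells_iff)
          show "T (a, b) < T (a, Suc b)"
          proof (cases "(a, Suc b) = c")
            case True
            then have "(a, b) \<in> cells lam'" using ab0 ne C' by auto
            then have "T' (a, b) \<le> N - 1" by (rule le)
            then show ?thesis using True ne T Npos by auto
          next
            case False
            then have "(a, Suc b) \<in> cells lam'" using ab C' by auto
            then show ?thesis using row False ne T by auto
          qed
        qed
        have b4: "\<forall>a b. (Suc a, b) \<in> cells lam \<longrightarrow> T (a, b) < T (Suc a, b)"
        proof (intro allI impI)
          fix a b assume ab: "(Suc a, b) \<in> cells lam"
          have ab0: "(a, b) \<in> cells lam" using ab sorted by (rule colD)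
          have ne: "(a, b) \<noteq> c" using ab cnot2 unfolding c_def by auto
          show "T (a, b) < T (Suc a, b)"
          proof (cases "(Suc a, b) = c")
            case True
            then have "(a, b) \<in> cells lam'" using ab0 ne C' by auto
            then have "T' (a, b) \<le> N - 1" by (rule le)
            then show ?thesis using True ne T Npos by auto
          next
            case False
            then have "(Suc a, b) \<in> cells lam'" using ab C' by auto
            then show ?thesis using col False ne T by auto
          qed
        qed
        have "T \<in> SYT lam" unfolding SYT_iff using b1 b2 b3 b4 by blast
        then show "T \<in> A i" unfolding A_def using T c_def by auto
      qed
    qed
    then show ?thesis unfolding num_SYT_def lam'_def by (rule bij_betw_same_card)
  qed
  have "num_SYT lam = card (\<Union>i\<in>Cor. A i)" unfolding num_SYT_def cover ..
  also have "\<dots> = (\<Sum>i\<in>Cor. card (A i))"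
    by (rule card_UN_disjoint[OF finCor]) (use finite_SYT disj in \<open>auto simp: A_def\<close>)
  also have "\<dots> = (\<Sum>i\<in>Cor. num_SYT (lam[i := lam ! i - 1]))" by (rule sum.cong) (auto simp: cardA)
  finally show ?thesis unfolding Cor_def .
qed


definition rf :: "int \<Rightarrow> real" where
  "rf k = (if k < 0 then 0 else 1 / fact (nat k))"

lemma rf_pred: "rf (k - 1) = real_of_int k * rf k"
proof (cases "k < 1")
  case True then show ?thesis by (cases "k = 0") (auto simp: rf_def)
next
  case False
  define n where "n = nat (k - 1)"
  have n: "k = int (Suc n)" using False unfolding n_def by simp
  then have "nat (k - 1) = n" "nat k = Suc n" by auto
  then show ?thesis using n unfolding rf_def by (simp add: divide_simps del: of_nat_Suc)
qed

lemma rf_neg: "k < 0 \<Longrightarrow> rf k = 0" by (simp add: rf_def)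

definition W :: "nat \<Rightarrow> (nat \<Rightarrow> int) \<Rightarrow> real" where
  "W l x = (\<Sum>\<sigma> | \<sigma> permutes {..<l}. real_of_int (sign \<sigma>) * (\<Prod>i<l. rf (x i - int (l - 1 - \<sigma> i))))"

lemma W_cong: "(\<And>i. i < l \<Longrightarrow> x i = y i) \<Longrightarrow> W l x = W l y"
  unfolding W_def by (intro sum.cong refl arg_cong2[where f="(*)"] prod.cong) auto

lemma W_neg: "i < l \<Longrightarrow> x i < 0 \<Longrightarrow> W l x = 0"
  unfolding W_def by (intro sum.neutral ballI) (auto intro!: prod_zero bexI[of _ i] rf_neg)

lemma prod_upd2: "i < (l::nat) \<Longrightarrow> (\<Prod>k<l. g ((x(i := v)) k) k) = g v i * (\<Prod>k\<in>{..<l}-{i}. g (x k) k)"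
  by (subst prod.remove[of _ i]) (auto intro!: prod.cong)

lemma W_rec: "(\<Sum>i<l. W l (x(i := x i - 1))) = real_of_int (\<Sum>i<l. x i - int (l - 1 - i)) * W l x"
proof -
  define d where "d \<sigma> i = int (l - 1 - \<sigma> i)" for \<sigma> :: "nat \<Rightarrow> nat" and i
  define Q where "Q \<sigma> = (\<Prod>k<l. rf (x k - d \<sigma> k))" for \<sigma>
  have step: "(\<Prod>k<l. rf ((x(i := x i - 1)) k - d \<sigma> k)) = real_of_int (x i - d \<sigma> i) * Q \<sigma>" if "i < l" for i \<sigma>
  proof -
    have "(\<Prod>k<l. rf ((x(i := x i - 1)) k - d \<sigma> k)) = rf (x i - 1 - d \<sigma> i) * (\<Prod>k\<in>{..<l}-{i}. rf (x k - d \<sigma> k))"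
      by (rule prod_upd2[OF that, where g = "\<lambda>v k. rf (v - d \<sigma> k)"])
    also have "rf (x i - 1 - d \<sigma> i) = real_of_int (x i - d \<sigma> i) * rf (x i - d \<sigma> i)"
      using rf_pred[of "x i - d \<sigma> i"] by (simp add: algebra_simps)
    also have "Q \<sigma> = rf (x i - d \<sigma> i) * (\<Prod>k\<in>{..<l}-{i}. rf (x k - d \<sigma> k))"
      unfolding Q_def using that by (subst prod.remove[of _ i]) auto
    ultimately show ?thesis by simp
  qed
  have gen1: "\<And>c q (a::nat\<Rightarrow>real) S. (\<Sum>i\<in>S. c * (a i * q)) = c * q * (\<Sum>i\<in>S. a i)"
    by (simp add: sum_distrib_left mult_ac)
  have gen2: "\<And>(a::(nat\<Rightarrow>nat)\<Rightarrow>real) c S. (\<Sum>\<sigma>\<in>S. a \<sigma> * c) = c * (\<Sum>\<sigma>\<in>S. a \<sigma>)"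
    by (metis sum_distrib_right mult.commute)
  have sd: "(\<Sum>i<l. d \<sigma> i) = (\<Sum>i<l. d id i)" if "\<sigma> permutes {..<l}" for \<sigma>
    unfolding d_def using sum.permute[OF that, of "\<lambda>j. int (l - 1 - j)"] by (simp add: comp_def)
  have "(\<Sum>i<l. W l (x(i := x i - 1))) = (\<Sum>i<l. \<Sum>\<sigma> | \<sigma> permutes {..<l}. real_of_int (sign \<sigma>) * (real_of_int (x i - d \<sigma> i) * Q \<sigma>))"
    unfolding W_def d_def[symmetric]
  proof (intro sum.cong refl)
    fix i \<sigma> assume i: "i \<in> {..<l}" and "\<sigma> \<in> {\<sigma>. \<sigma> permutes {..<l}}"
    show "real_of_int (sign \<sigma>) * (\<Prod>k<l. rf ((x(i := x i - 1)) k - d \<sigma> k)) =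
          real_of_int (sign \<sigma>) * (real_of_int (x i - d \<sigma> i) * Q \<sigma>)"
      using step[of i \<sigma>] i by simp
  qed
  also have "\<dots> = (\<Sum>\<sigma> | \<sigma> permutes {..<l}. real_of_int (sign \<sigma>) * Q \<sigma> * real_of_int (\<Sum>i<l. x i - d \<sigma> i))"
    by (subst sum.swap) (intro sum.cong refl, simp only: gen1 of_int_sum)
  also have "\<dots> = (\<Sum>\<sigma> | \<sigma> permutes {..<l}. real_of_int (sign \<sigma>) * Q \<sigma> * real_of_int (\<Sum>i<l. x i - d id i))"
  proof (intro sum.cong refl)
    fix \<sigma> assume "\<sigma> \<in> {\<sigma>. \<sigma> permutes {..<l}}"
    then have "(\<Sum>i<l. x i - d \<sigma> i) = (\<Sum>i<l. x i - d id i)"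
      unfolding sum_subtractf using sd[of \<sigma>] by simp
    then show "real_of_int (sign \<sigma>) * Q \<sigma> * real_of_int (\<Sum>i<l. x i - d \<sigma> i) =
      real_of_int (sign \<sigma>) * Q \<sigma> * real_of_int (\<Sum>i<l. x i - d id i)" by simp
  qed
  also have "\<dots> = real_of_int (\<Sum>i<l. x i - int (l - 1 - i)) * W l x"
    unfolding W_def Q_def d_def gen2 by simp
  finally show ?thesis .
qed

lemma W_antisym:
  assumes ij: "i < l" "j < l" "i \<noteq> j" and eq: "x i = x j"
  shows "W l x = 0"
proof -
  define t where "t = Transposition.transpose i j"
  have tp: "t permutes {..<l}" unfolding t_def using ij by (intro permutes_swap_id) auto
  define g where "g \<sigma> = real_of_int (sign \<sigma>) * (\<Prod>k<l. rf (x k - int (l - 1 - \<sigma> k)))" for \<sigma> :: "nat \<Rightarrow> nat"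
  have "W l x = (\<Sum>\<sigma> | \<sigma> permutes {..<l}. g (\<sigma> \<circ> t))"
    unfolding W_def g_def[symmetric] by (rule sum_permutations_compose_right[OF tp])
  also have "\<dots> = (\<Sum>\<sigma> | \<sigma> permutes {..<l}. - g \<sigma>)"
  proof (intro sum.cong refl)
    fix \<sigma> assume "\<sigma> \<in> {\<sigma>. \<sigma> permutes {..<l}}"
    then have sp: "\<sigma> permutes {..<l}" by simp
    have "permutation \<sigma>" "permutation t" using sp tp by (auto simp: permutation_permutes)
    then have sgn: "sign (\<sigma> \<circ> t) = - sign \<sigma>"
      using sign_compose[of \<sigma> t] ij unfolding t_def
      by (simp add: sign_swap_id)
    have "(\<Prod>k<l. rf (x k - int (l - 1 - (\<sigma> \<circ> t) k))) = (\<Prod>k<l. rf (x (t k) - int (l - 1 - \<sigma> (t k))))"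
    proof (intro prod.cong refl)
      fix k assume "k \<in> {..<l}"
      have "x (t k) = x k" unfolding t_def using eq by (auto simp: Transposition.transpose_def)
      then show "rf (x k - int (l - 1 - (\<sigma> \<circ> t) k)) = rf (x (t k) - int (l - 1 - \<sigma> (t k)))" by simp
    qed
    also have "\<dots> = (\<Prod>k<l. rf (x k - int (l - 1 - \<sigma> k)))"
      using prod.permute[OF tp, of "\<lambda>k. rf (x k - int (l - 1 - \<sigma> k))"] by (simp add: comp_def)
    finally show "g (\<sigma> \<circ> t) = - g \<sigma>" unfolding g_def sgn by simp
  qed
  also have "\<dots> = - W l x" unfolding W_def g_def by (simp add: sum_negf)
  finally show ?thesis by simp
qed

lemma perm_ge_id:
  assumes p: "\<sigma> permutes {..<(l::nat)}" and ge: "\<And>i. i < l \<Longrightarrow> i \<le> \<sigma> i"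
  shows "\<sigma> = id"
proof -
  have eq: "\<sigma> i = i" if "i < l" for i
  proof (rule ccontr)
    assume "\<sigma> i \<noteq> i"
    then have "i < \<sigma> i" using ge[OF that] by simp
    then have "(\<Sum>k<l. k) < (\<Sum>k<l. \<sigma> k)"
      by (intro sum_strict_mono_ex1) (use ge that in auto)
    moreover have "(\<Sum>k<l. \<sigma> k) = (\<Sum>k<l. k)"
      using sum.permute[OF p, of id] by (simp add: comp_def)
    ultimately show False by simp
  qed
  show ?thesis
  proof
    fix i show "\<sigma> i = id i"
      by (cases "i < l") (auto simp: eq permutes_not_in[OF p])
  qed
qed

lemma W_base: "W l (\<lambda>i. int (l - 1 - i)) = 1"
proof -
  have z: "real_of_int (sign \<sigma>) * (\<Prod>i<l. rf (int (l - 1 - i) - int (l - 1 - \<sigma> i))) = 0"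
    if "\<sigma> permutes {..<l}" "\<sigma> \<noteq> id" for \<sigma>
  proof -
    have "\<exists>i<l. \<sigma> i < i" using perm_ge_id[OF that(1)] that(2) by (meson not_le)
    then obtain i where i: "i < l" "\<sigma> i < i" by blast
    have "\<sigma> i < l" using i permutes_in_image[OF that(1)] by auto
    then have "int (l - 1 - i) - int (l - 1 - \<sigma> i) < 0" using i by linarith
    then show ?thesis using i by (auto intro!: prod_zero bexI[of _ i] rf_neg)
  qed
  have "W l (\<lambda>i. int (l - 1 - i)) = real_of_int (sign (id::nat\<Rightarrow>nat)) * (\<Prod>i<l. rf (int (l - 1 - i) - int (l - 1 - id i)))"
    unfolding W_def
  proof -
    have fin: "finite {\<sigma>. \<sigma> permutes {..<l}}" by (rule finite_permutations) simp
    have "id \<in> {\<sigma>. \<sigma> permutes {..<l}}" by (simp add: permutes_id)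
    note r = sum.remove[OF fin this]
    show "(\<Sum>\<sigma> | \<sigma> permutes {..<l}. real_of_int (sign \<sigma>) * (\<Prod>i<l. rf (int (l - 1 - i) - int (l - 1 - \<sigma> i)))) =
      real_of_int (sign (id::nat\<Rightarrow>nat)) * (\<Prod>i<l. rf (int (l - 1 - i) - int (l - 1 - id i)))"
      unfolding r by (subst sum.neutral) (use z in auto)
  qed
  also have "\<dots> = 1" by (simp add: rf_def)
  finally show ?thesis .
qed

lemma degvec_int: "i < length lam \<Longrightarrow> int (degvec lam i) = int (lam ! i) + int (length lam - 1 - i)"
  unfolding degvec_def by simp

lemma degvec_remove:
  assumes "corner lam i" "k < length lam"
  shows "int (degvec (lam[i := lam ! i - 1]) k) = ((\<lambda>k. int (degvec lam k))(i := int (degvec lam i) - 1)) k"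
proof -
  have i: "i < length lam" "0 < lam ! i" using assms(1) unfolding corner_def by auto
  show ?thesis
  proof (cases "k = i")
    case True then show ?thesis using i assms(2) by (simp add: degvec_int)
  next
    case False then show ?thesis using assms(2) by (simp add: degvec_def)
  qed
qed

lemma noncorner_zero:
  assumes s: "sorted_wrt (\<ge>) lam" and i: "i < length lam" and nc: "\<not> corner lam i"
  shows "W (length lam) ((\<lambda>k. int (degvec lam k))(i := int (degvec lam i) - 1)) = 0"
proof (cases "Suc i < length lam \<and> lam ! Suc i = lam ! i")
  case True
  show ?thesis
    by (rule W_antisym[of i _ "Suc i"]) (use True i in \<open>auto simp: degvec_int\<close>)
next
  case False
  have "lam ! Suc i \<le> lam ! i" if "Suc i < length lam" using sorted_nth[OF s, of i "Suc i"] that by simp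
  then have "lam ! i = 0 \<and> Suc i = length lam"
    using nc False i unfolding corner_def by (metis le_neq_implies_less Suc_lessI le_zero_eq not_gr_zero)
  then show ?thesis
    by (intro W_neg[of i]) (use i in \<open>auto simp: degvec_int\<close>)
qed

lemma sum_degvec: "(\<Sum>i<length lam. int (degvec lam i) - int (length lam - 1 - i)) = int (psize lam)"
proof -
  have "(\<Sum>i<length lam. int (degvec lam i) - int (length lam - 1 - i)) = (\<Sum>i<length lam. int (lam ! i))"
    by (intro sum.cong refl) (simp add: degvec_int)
  also have "\<dots> = int (psize lam)"
    unfolding psize_def sum_list_sum_nth atLeast0LessThan by simp
  finally show ?thesis .
qed

theorem hook_W:
  assumes "sorted_wrt (\<ge>) lam"
  shows "real (num_SYT lam) = fact (psize lam) * W (length lam) (\<lambda>i. int (degvec lam i))"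
proof -
  have "\<forall>lam. sorted_wrt (\<ge>) lam \<longrightarrow> psize lam = N \<longrightarrow>
     real (num_SYT lam) = fact (psize lam) * W (length lam) (\<lambda>i. int (degvec lam i))" for N
  proof (induction N)
    case 0
    show ?case
    proof (intro allI impI)
      fix lam :: "nat list" assume "sorted_wrt (\<ge>) lam" "psize lam = 0"
      then have z: "\<forall>i<length lam. lam ! i = 0" using elem_le_sum_list[of _ lam] unfolding psize_def by fastforce
      have "W (length lam) (\<lambda>i. int (degvec lam i)) = W (length lam) (\<lambda>i. int (length lam - 1 - i))"
        by (rule W_cong) (simp add: degvec_int z)
      then show "real (num_SYT lam) = fact (psize lam) * W (length lam) (\<lambda>i. int (degvec lam i))"
        using SYT_zero[OF \<open>psize lam = 0\<close>] \<open>psize lam = 0\<close> W_base[of "length lam"] by simp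
    qed
  next
    case (Suc N)
    show ?case
    proof (intro allI impI)
      fix lam :: "nat list" assume s: "sorted_wrt (\<ge>) lam" and p: "psize lam = Suc N"
      define l where "l = length lam"
      define x where "x = (\<lambda>i. int (degvec lam i))"
      have "real (num_SYT lam) = (\<Sum>i | corner lam i. real (num_SYT (lam[i := lam ! i - 1])))"
        using SYT_rec[OF s] p by simp
      also have "\<dots> = (\<Sum>i | corner lam i. fact N * W l (x(i := x i - 1)))"
      proof (intro sum.cong refl)
        fix i assume "i \<in> {i. corner lam i}"
        then have c: "corner lam i" by simp
        have "real (num_SYT (lam[i := lam ! i - 1])) = fact (psize (lam[i := lam ! i - 1])) *
            W (length (lam[i := lam ! i - 1])) (\<lambda>k. int (degvec (lam[i := lam ! i - 1]) k))"
          using Suc.IH sorted_remove[OF s c] psize_remove[OF c] p by simp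
        also have "W (length (lam[i := lam ! i - 1])) (\<lambda>k. int (degvec (lam[i := lam ! i - 1]) k)) = W l (x(i := x i - 1))"
          unfolding l_def x_def by (simp only: length_list_update) (rule W_cong, rule degvec_remove[OF c])
        finally show "real (num_SYT (lam[i := lam ! i - 1])) = fact N * W l (x(i := x i - 1))"
          using psize_remove[OF c] p by simp
      qed
      also have "\<dots> = (\<Sum>i<l. fact N * W l (x(i := x i - 1)))"
        by (rule sum.mono_neutral_left) (use noncorner_zero[OF s] in \<open>auto simp: corner_def l_def x_def\<close>)
      also have "\<dots> = fact N * (real_of_int (\<Sum>i<l. x i - int (l - 1 - i)) * W l x)"
        by (simp add: sum_distrib_left[symmetric] W_rec)
      also have "real_of_int (\<Sum>i<l. x i - int (l - 1 - i)) = real (Suc N)"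
        unfolding l_def x_def sum_degvec p by simp
      finally show "real (num_SYT lam) = fact (psize lam) * W (length lam) (\<lambda>i. int (degvec lam i))"
        unfolding p l_def[symmetric] x_def[symmetric] by (simp add: algebra_simps)
    qed
  qed
  then show ?thesis using assms by blast
qed


lemma vdm: "det (mat l l (\<lambda>(i,j). fall (x i) j)) = (\<Prod>j<l. \<Prod>i<j. x j - x i)"
proof (induction l arbitrary: x)
  case 0
  then show ?case by (simp add: det_dim_zero)
next
  case (Suc l)
  define n where "n = Suc l"
  define A where "A = mat n n (\<lambda>(i,j). fall (x i) j)"
  define E where "E = mat n n (\<lambda>(i,j). (if i = j then 1 else 0) + (if Suc i = j then -(x 0 - real i) else 0))"
  define B where "B = mat n n (\<lambda>(i,j). if j = 0 then 1 else fall (x i) (j - 1) * (x i - x 0))"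
  have cA: "A \<in> carrier_mat n n" and cE: "E \<in> carrier_mat n n" and cB: "B \<in> carrier_mat n n"
    unfolding A_def E_def B_def by auto
  have AE: "A * E = B"
  proof (rule eq_matI)
    fix i j assume ij: "i < dim_row B" "j < dim_col B"
    then have i: "i < n" and j: "j < n" unfolding B_def by auto
    have "(A * E) $$ (i, j) = (\<Sum>k\<in>{0..<n}. fall (x i) k * ((if k = j then 1 else 0) + (if Suc k = j then -(x 0 - real k) else 0)))"
      using i j unfolding A_def E_def by (simp add: scalar_prod_def)
    also have "\<dots> = (\<Sum>k\<in>{0..<n}. if k = j then fall (x i) k else 0) + (\<Sum>k\<in>{0..<n}. if Suc k = j then fall (x i) k * (-(x 0 - real k)) else 0)"
      unfolding sum.distrib[symmetric] by (intro sum.cong refl) auto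
    also have "(\<Sum>k\<in>{0..<n}. if k = j then fall (x i) k else 0) = fall (x i) j"
      using j by (simp add: sum.delta')
    also have "(\<Sum>k\<in>{0..<n}. if Suc k = j then fall (x i) k * (-(x 0 - real k)) else 0)
        = (if j = 0 then 0 else fall (x i) (j - 1) * (-(x 0 - real (j - 1))))"
    proof (cases j)
      case 0 then show ?thesis by simp
    next
      case (Suc j')
      then have "(\<Sum>k\<in>{0..<n}. if Suc k = j then fall (x i) k * (-(x 0 - real k)) else 0)
          = (\<Sum>k\<in>{0..<n}. if k = j' then fall (x i) k * (-(x 0 - real k)) else 0)" by simp
      also have "\<dots> = fall (x i) j' * (-(x 0 - real j'))" using j Suc by (simp add: sum.delta')
      finally show ?thesis using Suc by simp
    qed
    also have "fall (x i) j + (if j = 0 then 0 else fall (x i) (j - 1) * (-(x 0 - real (j - 1)))) = B $$ (i, j)"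
    proof (cases j)
      case 0 then show ?thesis using i j unfolding B_def by simp
    next
      case (Suc j')
      then show ?thesis using i j unfolding B_def by (simp add: fall_Suc algebra_simps)
    qed
    finally show "(A * E) $$ (i, j) = B $$ (i, j)" .
  qed (auto simp: A_def E_def B_def)
  have detE: "det E = 1"
  proof -
    have "upper_triangular E" unfolding E_def upper_triangular_def by auto
    then have "det E = prod_list (diag_mat E)" using det_upper_triangular cE by blast
    also have "diag_mat E = map (\<lambda>i. 1) [0..<n]" unfolding diag_mat_def E_def by auto
    finally show ?thesis by (simp add: map_replicate_const)
  qed
  have detA: "det A = det B"
    using det_mult[OF cA cE] detE AE by simp
  have B0: "B $$ (0, j) = (if j = 0 then 1 else 0)" if "j < n" for j
    using that unfolding B_def by auto
  have detB: "det B = det (mat_delete B 0 0)"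
  proof -
    have "det B = (\<Sum>j<n. B $$ (0, j) * cofactor B 0 j)"
      by (rule laplace_expansion_row[OF cB]) (simp add: n_def)
    also have "\<dots> = (\<Sum>j<n. if j = 0 then cofactor B 0 j else 0)"
      by (intro sum.cong refl) (simp add: B0)
    also have "\<dots> = cofactor B 0 0" by (simp add: n_def)
    finally show ?thesis by (simp add: cofactor_def)
  qed
  define a where "a i = vec l (\<lambda>j. fall (x (Suc i)) j)" for i
  define c where "c i = x (Suc i) - x 0" for i
  have MD: "mat_delete B 0 0 = mat\<^sub>r l l (\<lambda>i. c i \<cdot>\<^sub>v a i)"
    by (rule eq_matI) (auto simp: mat_delete_def B_def n_def a_def c_def mat_of_rows_def)
  have ac: "a \<in> {0..<l} \<rightarrow> carrier_vec l" unfolding a_def by auto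
  have MR: "mat\<^sub>r l l a = mat l l (\<lambda>(i,j). fall ((x \<circ> Suc) i) j)"
    by (rule eq_matI) (auto simp: a_def mat_of_rows_def)
  have "det A = prod c {0..<l} * det (mat l l (\<lambda>(i,j). fall ((x \<circ> Suc) i) j))"
    unfolding detA detB MD det_rows_mul[OF ac] MR ..
  also have "\<dots> = (\<Prod>i<l. x (Suc i) - x 0) * (\<Prod>j<l. \<Prod>i<j. x (Suc j) - x (Suc i))"
    unfolding Suc.IH c_def atLeast0LessThan by simp
  also have "\<dots> = (\<Prod>j<Suc l. \<Prod>i<j. x j - x i)"
    unfolding prod.lessThan_Suc_shift by (simp add: prod.distrib)
  finally show ?case unfolding A_def n_def .
qed


definition rv :: "nat \<Rightarrow> nat \<Rightarrow> nat" where
  "rv l j = (if j < l then l - 1 - j else j)"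

lemma rv_permutes: "rv l permutes {..<l}"
proof -
  have "bij_betw (rv l) {..<l} {..<l}"
    by (rule bij_betw_byWitness[where f'="rv l"]) (auto simp: rv_def)
  moreover have "\<forall>j. j \<notin> {..<l} \<longrightarrow> rv l j = j" by (simp add: rv_def)
  ultimately show ?thesis by (intro bij_imp_permutes) auto
qed

lemma perm_rev_sum:
  fixes G :: "(nat \<Rightarrow> nat) \<Rightarrow> 'a :: comm_ring_1"
  shows "(\<Sum>p | p permutes {..<l}. of_int (sign p) * G p)
     = of_int (sign (rv l)) * (\<Sum>\<sigma> | \<sigma> permutes {..<l}. of_int (sign \<sigma>) * G (rv l \<circ> \<sigma>))"
proof -
  have "(\<Sum>p | p permutes {..<l}. of_int (sign p) * G p)
      = (\<Sum>\<sigma> | \<sigma> permutes {..<l}. of_int (sign (rv l \<circ> \<sigma>)) * G (rv l \<circ> \<sigma>))"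
    by (rule setum_permutations_compose_left[OF rv_permutes])
  also have "\<dots> = (\<Sum>\<sigma> | \<sigma> permutes {..<l}. of_int (sign (rv l)) * (of_int (sign \<sigma>) * G (rv l \<circ> \<sigma>)))"
  proof (intro sum.cong refl)
    fix \<sigma> assume "\<sigma> \<in> {\<sigma>. \<sigma> permutes {..<l}}"
    then have "permutation \<sigma>" "permutation (rv l)" using rv_permutes by (auto simp: permutation_permutes)
    then show "of_int (sign (rv l \<circ> \<sigma>)) * G (rv l \<circ> \<sigma>) = of_int (sign (rv l)) * (of_int (sign \<sigma>) * G (rv l \<circ> \<sigma>))"
      by (simp add: sign_compose)
  qed
  finally show ?thesis by (simp add: sum_distrib_left)
qed

lemma perm_inv_sum:
  fixes tt :: "nat \<Rightarrow> nat \<Rightarrow> 'a :: comm_ring_1"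
  shows "(\<Sum>p | p permutes {..<l}. of_int (sign p) * (\<Prod>i<l. tt (p i) i))
     = (\<Sum>p | p permutes {..<l}. of_int (sign p) * (\<Prod>j<l. tt j (p j)))"
proof -
  have "(\<Sum>p | p permutes {..<l}. of_int (sign p) * (\<Prod>i<l. tt (p i) i))
      = (\<Sum>p | p permutes {..<l}. of_int (sign p) * (\<Prod>j<l. tt j (inv_into UNIV p j)))"
  proof (intro sum.cong refl)
    fix p assume "p \<in> {p. p permutes {..<l}}"
    then have p: "p permutes {..<l}" by simp
    have "(\<Prod>i<l. tt (p i) i) = (\<Prod>j<l. tt (p (inv_into UNIV p j)) (inv_into UNIV p j))"
      using prod.permute[OF permutes_inv[OF p], of "\<lambda>i. tt (p i) i"] by (simp add: comp_def)
    also have "\<dots> = (\<Prod>j<l. tt j (inv_into UNIV p j))" using permutes_inverses(1)[OF p] by simp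
    finally show "of_int (sign p) * (\<Prod>i<l. tt (p i) i) = of_int (sign p) * (\<Prod>j<l. tt j (inv_into UNIV p j))" by simp
  qed
  also have "\<dots> = (\<Sum>p | p permutes {..<l}. of_int (sign (inv_into UNIV p)) * (\<Prod>j<l. tt j (inv_into UNIV p j)))"
  proof (intro sum.cong refl)
    fix p assume "p \<in> {p. p permutes {..<l}}"
    then have "permutation p" by (auto simp: permutation_permutes)
    then show "of_int (sign p) * (\<Prod>j<l. tt j (inv_into UNIV p j)) = of_int (sign (inv_into UNIV p)) * (\<Prod>j<l. tt j (inv_into UNIV p j))"
      by (simp add: sign_inverse)
  qed
  also have "\<dots> = (\<Sum>p | p permutes {..<l}. of_int (sign p) * (\<Prod>j<l. tt j (p j)))"
    by (rule sum_permutations_inverse[symmetric, where f = "\<lambda>p. of_int (sign p) * (\<Prod>j<l. tt j (p j))"])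
  finally show ?thesis .
qed

lemma det_leibniz:
  fixes f :: "nat \<times> nat \<Rightarrow> 'a :: comm_ring_1"
  shows "det (mat l l f) = (\<Sum>p | p permutes {..<l}. of_int (sign p) * (\<Prod>i<l. f (i, p i)))"
proof -
  have "det (mat l l f) = (\<Sum>p | p permutes {0..<l}. of_int (sign p) * (\<Prod>i=0..<l. mat l l f $$ (i, p i)))"
    by (rule det_def') simp
  also have "\<dots> = (\<Sum>p | p permutes {..<l}. of_int (sign p) * (\<Prod>i<l. f (i, p i)))"
    unfolding atLeast0LessThan
  proof (intro sum.cong refl arg_cong2[where f="(*)"] prod.cong)
    fix p i assume "p \<in> {p. p permutes {..<l}}" "i \<in> {..<l}"
    then have "p i < l" using permutes_in_image by fastforce
    then show "mat l l f $$ (i, p i) = f (i, p i)" using \<open>i \<in> {..<l}\<close> by simp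
  qed
  finally show ?thesis .
qed

lemma fall_fact: "d \<le> n \<Longrightarrow> fall (real n) d = fact n / fact (n - d)"
proof (induction d)
  case 0 then show ?case by simp
next
  case (Suc d)
  then have IH: "fall (real n) d = fact n / fact (n - d)" by simp
  have e: "n - d = Suc (n - Suc d)" using Suc.prems by simp
  have fe: "fact (n - d) = (real (n - d) :: real) * fact (n - Suc d)"
    by (subst (1 2) e) (simp only: fact_Suc)
  have rd: "real n - real d = real (n - d)" using Suc.prems by simp
  have nz: "real (n - d) \<noteq> 0" using Suc.prems by simp
  have g: "\<And>a b c::real. c \<noteq> 0 \<Longrightarrow> a / (c * b) * c = a / b" by simp
  have "fall (real n) (Suc d) = fact n / fact (n - d) * real (n - d)"
    unfolding fall_Suc IH rd ..
  also have "\<dots> = fact n / fact (n - Suc d)"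
    unfolding fe by (rule g[OF nz])
  finally show ?case .
qed

lemma T_eq: "smult (fall (real m) d) (He (m - d)) = smult (fact m) (if d \<le> m then E (m - d) else 0)"
proof (cases "d \<le> m")
  case True then show ?thesis by (simp add: fall_fact E_def)
next
  case False then show ?thesis by (simp add: fall_nat_big)
qed

lemma rf_fall: "fact m * rf (int m - int d) = fall (real m) d"
proof (cases "d \<le> m")
  case True
  then have "nat (int m - int d) = m - d" by simp
  then show ?thesis using True by (simp add: rf_def fall_fact)
next
  case False then show ?thesis by (simp add: rf_def fall_nat_big)
qed


lemma prod_smult: "(\<Prod>j\<in>A. smult (c j) (p j)) = smult (\<Prod>j\<in>A. c j) (\<Prod>j\<in>A. p j)"
  by (induction A rule: infinite_finite_induct) (auto simp: mult_smult_right smult_smult mult_ac)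

lemma rv_comp: "j < l \<Longrightarrow> \<sigma> permutes {..<l} \<Longrightarrow> (rv l \<circ> \<sigma>) j = l - 1 - \<sigma> j"
  using permutes_in_image[of \<sigma> "{..<l}" j] by (auto simp: rv_def)

lemma rv_app: "j < l \<Longrightarrow> \<sigma> permutes {..<l} \<Longrightarrow> rv l (\<sigma> j) = l - 1 - \<sigma> j"
  using rv_comp by simp

lemma smult_sum2: "smult c (\<Sum>x\<in>A. f x) = (\<Sum>x\<in>A. smult c (f x))"
  by (induction A rule: infinite_finite_induct) (auto simp: smult_add_right)

lemma Wr_expand:
  "wronskian (map (\<lambda>i. He (n i)) [0..<l]) = of_int (sign (rv l)) * smult (\<Prod>j<l. fact (n j))
     (\<Sum>\<sigma> | \<sigma> permutes {..<l}. of_int (sign \<sigma>) *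
        (if \<forall>j<l. l - 1 - \<sigma> j \<le> n j then PP l (\<lambda>j. n j - (l - 1 - \<sigma> j)) else 0))"
proof -
  define tt where "tt j k = smult (fall (real (n j)) k) (He (n j - k))" for j k
  have "wronskian (map (\<lambda>i. He (n i)) [0..<l]) = det (mat l l (\<lambda>(i, j). (pderiv ^^ i) (map (\<lambda>i. He (n i)) [0..<l] ! j)))"
    unfolding wronskian_def by simp
  also have "\<dots> = (\<Sum>p | p permutes {..<l}. of_int (sign p) * (\<Prod>i<l. (pderiv ^^ i) (map (\<lambda>i. He (n i)) [0..<l] ! p i)))"
    unfolding det_leibniz by simp
  also have "\<dots> = (\<Sum>p | p permutes {..<l}. of_int (sign p) * (\<Prod>i<l. tt (p i) i))"
  proof (intro sum.cong refl arg_cong2[where f="(*)"] prod.cong)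
    fix p i assume "p \<in> {p. p permutes {..<l}}" "i \<in> {..<l}"
    then have "p i < l" using permutes_in_image by fastforce
    then show "(pderiv ^^ i) (map (\<lambda>i. He (n i)) [0..<l] ! p i) = tt (p i) i"
      by (simp add: tt_def He_pderiv_pow)
  qed
  also have "\<dots> = (\<Sum>p | p permutes {..<l}. of_int (sign p) * (\<Prod>j<l. tt j (p j)))"
    by (rule perm_inv_sum)
  also have "\<dots> = of_int (sign (rv l)) * (\<Sum>\<sigma> | \<sigma> permutes {..<l}. of_int (sign \<sigma>) * (\<Prod>j<l. tt j ((rv l \<circ> \<sigma>) j)))"
    by (rule perm_rev_sum)
  also have "(\<Sum>\<sigma> | \<sigma> permutes {..<l}. of_int (sign \<sigma>) * (\<Prod>j<l. tt j ((rv l \<circ> \<sigma>) j)))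
     = (\<Sum>\<sigma> | \<sigma> permutes {..<l}. of_int (sign \<sigma>) * smult (\<Prod>j<l. fact (n j))
        (if \<forall>j<l. l - 1 - \<sigma> j \<le> n j then PP l (\<lambda>j. n j - (l - 1 - \<sigma> j)) else 0))"
  proof (intro sum.cong refl arg_cong2[where f="(*)"])
    fix \<sigma> assume "\<sigma> \<in> {\<sigma>. \<sigma> permutes {..<l}}"
    then have s: "\<sigma> permutes {..<l}" by simp
    have "(\<Prod>j<l. tt j ((rv l \<circ> \<sigma>) j)) = (\<Prod>j<l. smult (fact (n j)) (if l - 1 - \<sigma> j \<le> n j then E (n j - (l - 1 - \<sigma> j)) else 0))"
      by (intro prod.cong refl) (simp add: rv_app[OF _ s] tt_def T_eq)
    also have "\<dots> = smult (\<Prod>j<l. fact (n j)) (\<Prod>j<l. if l - 1 - \<sigma> j \<le> n j then E (n j - (l - 1 - \<sigma> j)) else 0)"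
      by (rule prod_smult)
    also have "(\<Prod>j<l. if l - 1 - \<sigma> j \<le> n j then E (n j - (l - 1 - \<sigma> j)) else 0)
        = (if \<forall>j<l. l - 1 - \<sigma> j \<le> n j then PP l (\<lambda>j. n j - (l - 1 - \<sigma> j)) else 0)"
      unfolding PP_def by (auto intro!: prod.cong prod_zero)
    finally show "(\<Prod>j<l. tt j ((rv l \<circ> \<sigma>) j)) = smult (\<Prod>j<l. fact (n j))
        (if \<forall>j<l. l - 1 - \<sigma> j \<le> n j then PP l (\<lambda>j. n j - (l - 1 - \<sigma> j)) else 0)" .
  qed
  also have "\<dots> = smult (\<Prod>j<l. fact (n j)) (\<Sum>\<sigma> | \<sigma> permutes {..<l}. of_int (sign \<sigma>) *
        (if \<forall>j<l. l - 1 - \<sigma> j \<le> n j then PP l (\<lambda>j. n j - (l - 1 - \<sigma> j)) else 0))"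
    by (simp add: smult_sum2 mult_smult_right)
  finally show ?thesis .
qed

lemma Delta_expand:
  "real_of_int (\<Prod>j<l. \<Prod>i<j. int (n j) - int (n i)) = real_of_int (sign (rv l)) * (\<Prod>j<l. fact (n j)) * W l (\<lambda>i. int (n i))"
proof -
  have "real_of_int (\<Prod>j<l. \<Prod>i<j. int (n j) - int (n i)) = (\<Prod>j<l. \<Prod>i<j. real (n j) - real (n i))"
    by simp
  also have "\<dots> = det (mat l l (\<lambda>(i,j). fall (real (n i)) j))"
    by (rule vdm[symmetric])
  also have "\<dots> = (\<Sum>p | p permutes {..<l}. of_int (sign p) * (\<Prod>i<l. fall (real (n i)) (p i)))"
    unfolding det_leibniz by simp
  also have "\<dots> = of_int (sign (rv l)) * (\<Sum>\<sigma> | \<sigma> permutes {..<l}. of_int (sign \<sigma>) * (\<Prod>i<l. fall (real (n i)) ((rv l \<circ> \<sigma>) i)))"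
    by (rule perm_rev_sum)
  also have "(\<Sum>\<sigma> | \<sigma> permutes {..<l}. of_int (sign \<sigma>) * (\<Prod>i<l. fall (real (n i)) ((rv l \<circ> \<sigma>) i)))
     = (\<Prod>j<l. fact (n j)) * W l (\<lambda>i. int (n i))"
    unfolding W_def sum_distrib_left
  proof (intro sum.cong refl)
    fix \<sigma> assume "\<sigma> \<in> {\<sigma>. \<sigma> permutes {..<l}}"
    then have s: "\<sigma> permutes {..<l}" by simp
    have "(\<Prod>i<l. fall (real (n i)) ((rv l \<circ> \<sigma>) i)) = (\<Prod>i<l. fact (n i) * rf (int (n i) - int (l - 1 - \<sigma> i)))"
      by (intro prod.cong refl) (simp add: rv_app[OF _ s] rf_fall)
    also have "\<dots> = (\<Prod>j<l. fact (n j)) * (\<Prod>i<l. rf (int (n i) - int (l - 1 - \<sigma> i)))"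
      by (rule prod.distrib)
    finally show "of_int (sign \<sigma>) * (\<Prod>i<l. fall (real (n i)) ((rv l \<circ> \<sigma>) i)) =
      (\<Prod>j<l. fact (n j)) * (real_of_int (sign \<sigma>) * (\<Prod>i<l. rf (int (n i) - int (l - 1 - \<sigma> i))))"
      by simp
  qed
  finally show ?thesis by simp
qed


lemma of_int_mult_poly: "(of_int k :: real poly) * p = smult (of_int k) p"
  by (simp add: of_int_poly)

lemma sym_char_eq:
  fixes lam mu :: "nat list"
  shows "real_of_int (sym_char lam mu) = (\<Sum>\<sigma> | \<sigma> permutes {..<length lam}. real_of_int (sign \<sigma>) *
     (if \<forall>j<length lam. length lam - 1 - \<sigma> j \<le> degvec lam j
      then real (Kc (length lam) mu (\<lambda>j. degvec lam j - (length lam - 1 - \<sigma> j))) else 0))"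
proof -
  define l where "l = length lam"
  have "real_of_int (sym_char lam mu) = (\<Sum>\<sigma> | \<sigma> permutes {..<l}. real_of_int (sign \<sigma>) *
        real (card {f \<in> {..<length mu} \<rightarrow>\<^sub>E {..<l}.
           \<forall>i<l. (l - 1 - \<sigma> i) + (\<Sum>k | k < length mu \<and> f k = i. mu ! k) = lam ! i + (l - 1 - i)}))"
    unfolding sym_char_def l_def Let_def by simp
  also have "\<dots> = (\<Sum>\<sigma> | \<sigma> permutes {..<l}. real_of_int (sign \<sigma>) *
     (if \<forall>j<l. l - 1 - \<sigma> j \<le> degvec lam j then real (Kc l mu (\<lambda>j. degvec lam j - (l - 1 - \<sigma> j))) else 0))"
  proof (intro sum.cong refl arg_cong2[where f="(*)"])
    fix \<sigma> :: "nat \<Rightarrow> nat"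
    have dv: "degvec lam i = lam ! i + (l - 1 - i)" if "i < l" for i using that unfolding degvec_def l_def by simp
    show "real (card {f \<in> {..<length mu} \<rightarrow>\<^sub>E {..<l}.
           \<forall>i<l. (l - 1 - \<sigma> i) + (\<Sum>k | k < length mu \<and> f k = i. mu ! k) = lam ! i + (l - 1 - i)}) =
       (if \<forall>j<l. l - 1 - \<sigma> j \<le> degvec lam j then real (Kc l mu (\<lambda>j. degvec lam j - (l - 1 - \<sigma> j))) else 0)"
    proof (cases "\<forall>j<l. l - 1 - \<sigma> j \<le> degvec lam j")
      case True
      have "{f \<in> {..<length mu} \<rightarrow>\<^sub>E {..<l}.
           \<forall>i<l. (l - 1 - \<sigma> i) + (\<Sum>k | k < length mu \<and> f k = i. mu ! k) = lam ! i + (l - 1 - i)}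
         = {f \<in> {..<length mu} \<rightarrow>\<^sub>E {..<l}. \<forall>i<l. fsum f mu i = degvec lam i - (l - 1 - \<sigma> i)}"
        using True dv unfolding fsum_def by force
      then show ?thesis using True unfolding Kc_def by simp
    next
      case False
      then obtain j where j: "j < l" "\<not> l - 1 - \<sigma> j \<le> degvec lam j" by blast
      have "{f \<in> {..<length mu} \<rightarrow>\<^sub>E {..<l}.
           \<forall>i<l. (l - 1 - \<sigma> i) + (\<Sum>k | k < length mu \<and> f k = i. mu ! k) = lam ! i + (l - 1 - i)} = {}"
        (is "?S = {}")
        using j dv[OF j(1)] by force
      then show ?thesis unfolding \<open>?S = {}\<close> if_not_P[OF False] by simp
    qed
  qed
  finally show ?thesis unfolding l_def .
qed

theorem theorem4p2:
  fixes lam :: "nat list"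
  assumes "is_partition lam"
  shows "smult (real (num_SYT lam)) (He_part lam) =
    (\<Sum>j = 0..psize lam div 2.
       monom ((-1) ^ j * fact (psize lam) / (fact j * fact (psize lam - 2 * j) * 2 ^ j)
              * real_of_int (sym_char lam (cyc_type_2_1 (psize lam) j)))
             (psize lam - 2 * j))"
proof -
  define l where "l = length lam"
  define n where "n = degvec lam"
  define N where "N = psize lam"
  define ok where "ok \<sigma> = (\<forall>j<l. l - 1 - \<sigma> j \<le> n j)" for \<sigma> :: "nat \<Rightarrow> nat"
  define ms where "ms \<sigma> = (\<lambda>j. n j - (l - 1 - \<sigma> j))" for \<sigma> :: "nat \<Rightarrow> nat"
  define S where "S = (\<Sum>\<sigma> | \<sigma> permutes {..<l}. (of_int (sign \<sigma>) :: real poly) * (if ok \<sigma> then PP l (ms \<sigma>) else 0))"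
  define Fk where "Fk = (\<Prod>j<l. fact (n j) :: real)"
  define Wv where "Wv = W l (\<lambda>i. int (n i))"
  define s where "s = real_of_int (sign (rv l))"
  define D where "D = real_of_int (Delta lam)"
  have sorted: "sorted_wrt (\<ge>) lam" using assms unfolding is_partition_def by simp
  have hook: "real (num_SYT lam) = fact N * Wv"
    using hook_W[OF sorted] unfolding N_def Wv_def l_def n_def .
  have Dexp: "D = s * Fk * Wv"
    unfolding D_def Delta_def s_def Fk_def Wv_def l_def n_def using Delta_expand[where l = "length lam" and n = "degvec lam"] by simp
  have Dnz: "D \<noteq> 0"
  proof -
    have "int (degvec lam j) - int (degvec lam i) \<noteq> 0" if "i < j" "j < length lam" for i j
    proof -
      have "lam ! j \<le> lam ! i" using sorted_nth[OF sorted, of i j] that by simp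
      then have "degvec lam j < degvec lam i" using that unfolding degvec_def by simp
      then show ?thesis by simp
    qed
    then show ?thesis unfolding D_def Delta_def by simp
  qed
  have ss: "s * s = 1" unfolding s_def by (simp flip: of_int_mult)
  have Wr: "wronskian (map (\<lambda>i. He (degvec lam i)) [0..<length lam]) = smult (s * Fk) S"
    using Wr_expand[where l = "length lam" and n = "degvec lam"]
    unfolding S_def s_def Fk_def ok_def ms_def l_def n_def of_int_mult_poly by simp
  have fac: "real (num_SYT lam) * (s * Fk) / D = fact N"
  proof -
    have "real (num_SYT lam) * (s * Fk) / D = fact N * (Wv * s * Fk) / D"
      unfolding hook by (simp add: mult_ac)
    also have "Wv * s * Fk = D" unfolding Dexp by simp
    finally show ?thesis using Dnz by simp
  qed
  have LHS: "smult (real (num_SYT lam)) (He_part lam) = smult (fact N) S"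
    unfolding He_part_def Wr D_def[symmetric] using fac by simp
  have summs: "(\<Sum>i<l. ms \<sigma> i) = N" if o: "ok \<sigma>" and p: "\<sigma> permutes {..<l}" for \<sigma>
  proof -
    have "int (\<Sum>i<l. ms \<sigma> i) = (\<Sum>i<l. int (n i) - int (l - 1 - \<sigma> i))"
      using o unfolding ms_def ok_def by (simp add: of_nat_diff)
    also have "\<dots> = (\<Sum>i<l. int (n i)) - (\<Sum>i<l. int (l - 1 - \<sigma> i))" by (simp add: sum_subtractf)
    also have "(\<Sum>i<l. int (l - 1 - \<sigma> i)) = (\<Sum>i<l. int (l - 1 - i))"
      using sum.permute[OF p, of "\<lambda>j. int (l - 1 - j)"] by (simp add: comp_def)
    also have "(\<Sum>i<l. int (n i)) - (\<Sum>i<l. int (l - 1 - i)) = int N"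
      using sum_degvec[of lam] unfolding N_def n_def l_def by (simp add: sum_subtractf)
    finally have "int (\<Sum>i<l. ms \<sigma> i) = int N" .
    then show ?thesis by (simp only: of_nat_eq_iff)
  qed
  have chi: "real_of_int (sym_char lam mu) = (\<Sum>\<sigma> | \<sigma> permutes {..<l}. real_of_int (sign \<sigma>) *
      (if ok \<sigma> then real (Kc l mu (ms \<sigma>)) else 0))" for mu
    unfolding sym_char_eq ok_def ms_def l_def n_def ..
  have cS: "coeff S a = (\<Sum>\<sigma> | \<sigma> permutes {..<l}. real_of_int (sign \<sigma>) * (if ok \<sigma> then coeff (PP l (ms \<sigma>)) a else 0))" for a
    unfolding S_def coeff_sum of_int_mult_poly by (intro sum.cong refl) auto
  show ?thesis
  proof (rule poly_eqI)
    fix a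
    define b where "b = (N - a) div 2"
    define cc where "cc j = (-1) ^ j * fact N / (fact j * fact (N - 2 * j) * 2 ^ j)
              * real_of_int (sym_char lam (cyc_type_2_1 N j))" for j
    have R: "coeff (\<Sum>j = 0..N div 2. monom (cc j) (N - 2 * j)) a = (\<Sum>j = 0..N div 2. if N - 2 * j = a then cc j else 0)"
      by (simp add: coeff_sum coeff_monom)
    show "coeff (smult (real (num_SYT lam)) (He_part lam)) a =
      coeff (\<Sum>j = 0..psize lam div 2. monom ((-1) ^ j * fact (psize lam) / (fact j * fact (psize lam - 2 * j) * 2 ^ j)
              * real_of_int (sym_char lam (cyc_type_2_1 (psize lam) j))) (psize lam - 2 * j)) a"
      unfolding N_def[symmetric] cc_def[symmetric] R LHS coeff_smult cS
    proof (cases "a \<le> N \<and> even (N - a)")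
      case C: True
      have Nb: "N - 2 * b = a" using C unfolding b_def by auto
      have cP: "coeff (PP l (ms \<sigma>)) a = (-1/2)^b / (fact a * fact b) * real (Kc l (replicate b 2 @ replicate a 1) (ms \<sigma>))"
        if "ok \<sigma>" "\<sigma> permutes {..<l}" for \<sigma>
        unfolding coeff_PP summs[OF that] if_P[OF C] b_def ..
      have "(\<Sum>\<sigma> | \<sigma> permutes {..<l}. real_of_int (sign \<sigma>) * (if ok \<sigma> then coeff (PP l (ms \<sigma>)) a else 0))
          = (-1/2)^b / (fact a * fact b) * (\<Sum>\<sigma> | \<sigma> permutes {..<l}. real_of_int (sign \<sigma>) *
             (if ok \<sigma> then real (Kc l (replicate b 2 @ replicate a 1) (ms \<sigma>)) else 0))"
        unfolding sum_distrib_left by (intro sum.cong refl) (auto simp: cP)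
      also have "\<dots> = (-1/2)^b / (fact a * fact b) * real_of_int (sym_char lam (cyc_type_2_1 N b))"
        unfolding chi cyc_type_2_1_def Nb ..
      finally have L: "fact N * (\<Sum>\<sigma> | \<sigma> permutes {..<l}. real_of_int (sign \<sigma>) * (if ok \<sigma> then coeff (PP l (ms \<sigma>)) a else 0))
          = fact N * ((-1/2)^b / (fact a * fact b) * real_of_int (sym_char lam (cyc_type_2_1 N b)))" by simp
      have "(\<Sum>j = 0..N div 2. if N - 2 * j = a then cc j else 0) = (\<Sum>j = 0..N div 2. if j = b then cc j else 0)"
      proof (intro sum.cong refl)
        fix j assume "j \<in> {0..N div 2}"
        then have "N - 2 * j = a \<longleftrightarrow> j = b" using C unfolding b_def by auto
        then show "(if N - 2 * j = a then cc j else 0) = (if j = b then cc j else 0)" by simp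
      qed
      also have "\<dots> = cc b" using C unfolding b_def by (simp add: sum.delta')
      also have "cc b = fact N * ((-1/2)^b / (fact a * fact b) * real_of_int (sym_char lam (cyc_type_2_1 N b)))"
      proof -
        have h: "(-1/2::real)^b = (-1)^b / 2^b" by (metis power_divide)
        show ?thesis unfolding cc_def Nb h by (simp add: field_simps)
      qed
      finally show "fact N * (\<Sum>\<sigma> | \<sigma> permutes {..<l}. real_of_int (sign \<sigma>) * (if ok \<sigma> then coeff (PP l (ms \<sigma>)) a else 0))
          = (\<Sum>j = 0..N div 2. if N - 2 * j = a then cc j else 0)" using L by simp
    next
      case C: False
      have z1: "coeff (PP l (ms \<sigma>)) a = 0" if "ok \<sigma>" "\<sigma> permutes {..<l}" for \<sigma>
        unfolding coeff_PP summs[OF that] if_not_P[OF C] ..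
      have z2: "(\<Sum>j = 0..N div 2. if N - 2 * j = a then cc j else 0) = 0"
      proof (rule sum.neutral, intro ballI)
        fix j assume "j \<in> {0..N div 2}"
        then have "2 * j \<le> N" by auto
        then show "(if N - 2 * j = a then cc j else 0) = 0" using C by auto
      qed
      show "fact N * (\<Sum>\<sigma> | \<sigma> permutes {..<l}. real_of_int (sign \<sigma>) * (if ok \<sigma> then coeff (PP l (ms \<sigma>)) a else 0))
          = (\<Sum>j = 0..N div 2. if N - 2 * j = a then cc j else 0)"
        unfolding z2 using z1 by (simp add: sum.neutral)
    qed
  qed
qed


end
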